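(* Let $f\colon \mathbb{R}^n \times \mathbb{R}^p \rightarrow \overline{\mathbb{R}}$ be a proper nearly convex function and $G\colon \mathbb{R}^n \rightrightarrows \mathbb{R}^p$ a nearly convex set-valued mapping. Let $m(x)=\inf\{f(x,y)\mid y\in G(x)\}$ (with $\inf\emptyset=\infty$), and assume $m$ is finite at $\bar x \in \mathbb{R}^n$. For $\eta>0$ let $S_\eta(\bar x)= \{ y \in G(\bar x) \mid f (\bar x, y) \le m (\bar x)+\eta \}$, and for $\varepsilon,\eta\ge0$ let $\varGamma(\eta+\varepsilon)=\{(\gamma_1, \gamma_2) \mid \gamma_1 \ge 0,\ \gamma_2 \ge 0,\ \gamma_1+\gamma_2=\eta+\varepsilon\}$. If $$\mathrm{ri}(\mathrm{dom}\, f ) \cap \mathrm{ri}(\mathrm{gph}\, G ) \neq\emptyset,$$ then for every $\varepsilon \ge 0$, $$\begin{aligned}\partial _\varepsilon m(\bar x)&=\bigcap_{\eta >0}\ \bigcap_{ y \in S_\eta (\bar x)}\ \bigcup_{(\gamma_1, \gamma_2) \in \varGamma(\eta+\varepsilon)}\big\{\xi\in \mathbb{R}^n \mid (\xi,0) \in \partial_{\gamma_1}f(\bar x,y) +N_{\gamma_2}((\bar x, y); \mathrm{gph}\, G ) \big\}\\ &=\bigcap_{\eta >0}\ \bigcup_{y \in \mathbb{R}^p}\ \bigcup_{(\gamma_1, \gamma_2) \in \varGamma(\eta+\varepsilon)}\big\{\xi \in \mathbb{R}^n \mid (\xi,0) \in \partial_{\gamma_1}f(\bar x, y) +N_{\gamma_2}((\bar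 x, y); \mathrm{gph}\, G ) \big\}.\end{aligned}$$
   Context: $\overline{\mathbb{R}}=[-\infty,\infty]$; proper means nonempty domain $\mathrm{dom}\,f=\{z\mid f(z)<\infty\}$ and never $-\infty$. A set $D$ is nearly convex if there is a convex $E$ with $E\subset D\subset\overline{E}$; a function is nearly convex if its epigraph is nearly convex; a set-valued mapping is nearly convex if its graph $\mathrm{gph}\,G=\{(x,y)\mid y\in G(x)\}$ is nearly convex. $\mathrm{ri}\,D=\{a\in D\mid\exists\delta>0,\ B(a;\delta)\cap\mathrm{aff}\,D\subset D\}$. For $\psi$ on $\mathbb{R}^k$, $\gamma\ge0$ and $\bar z$ with $\psi(\bar z)$ finite, $\partial_\gamma\psi(\bar z)=\{\zeta\mid\langle\zeta,z-\bar z\rangle-\gamma\le\psi(z)-\psi(\bar z)\ \forall z\}$ (the set-builder conditions are understood for those $y$ at which these objects are defined). For nonempty $\Omega$ and $\bar z\in\Omega$, $N_\gamma(\bar z;\Omega)=\{\zeta\mid\langle\zeta,z-\bar z\rangle\le\gamma\ \forall z\in\Omega\}$. Sums of sets are Minkowski sums. *)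

theory Defs
  imports "HOL-Analysis.Analysis"
begin

definition edom :: "('a \<Rightarrow> ereal) \<Rightarrow> 'a set" where
  "edom f = {z. f z < \<infinity>}"

definition proper_fun :: "('a \<Rightarrow> ereal) \<Rightarrow> bool" where
  "proper_fun f \<longleftrightarrow> edom f \<noteq> {} \<and> (\<forall>z. f z \<noteq> -\<infinity>)"

definition epigraph :: "('a \<Rightarrow> ereal) \<Rightarrow> ('a \<times> real) set" where
  "epigraph f = {(z, t). f z \<le> ereal t}"

definition nearly_convex :: "'a::real_normed_vector set \<Rightarrow> bool" where
  "nearly_convex D \<longleftrightarrow> (\<exists>E. convex E \<and> E \<subseteq> D \<and> D \<subseteq> closure E)"

definition nearly_convex_fun :: "('a::real_normed_vector \<Rightarrow> ereal) \<Rightarrow> bool" where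
  "nearly_convex_fun f \<longleftrightarrow> nearly_convex (epigraph f)"

definition gph :: "('a \<Rightarrow> 'b set) \<Rightarrow> ('a \<times> 'b) set" where
  "gph G = {(x, y). y \<in> G x}"

definition nearly_convex_map :: "('a::real_normed_vector \<Rightarrow> 'b::real_normed_vector set) \<Rightarrow> bool" where
  "nearly_convex_map G \<longleftrightarrow> nearly_convex (gph G)"

definition marginal :: "('a \<times> 'b \<Rightarrow> ereal) \<Rightarrow> ('a \<Rightarrow> 'b set) \<Rightarrow> 'a \<Rightarrow> ereal" where
  "marginal f G x = Inf {f (x, y) | y. y \<in> G x}"

definition eps_subdiff :: "('k::real_inner \<Rightarrow> ereal) \<Rightarrow> real \<Rightarrow> 'k \<Rightarrow> 'k set" where
  "eps_subdiff \<psi> \<gamma> zb =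
     (if \<bar>\<psi> zb\<bar> \<noteq> \<infinity>
      then {\<zeta>. \<forall>z. ereal (inner \<zeta> (z - zb) - \<gamma>) \<le> \<psi> z - \<psi> zb}
      else {})"

definition eps_normal :: "real \<Rightarrow> 'k::real_inner \<Rightarrow> 'k set \<Rightarrow> 'k set" where
  "eps_normal \<gamma> zb \<Omega> =
     (if zb \<in> \<Omega> then {\<zeta>. \<forall>z\<in>\<Omega>. inner \<zeta> (z - zb) \<le> \<gamma>} else {})"

definition Gamma_set :: "real \<Rightarrow> (real \<times> real) set" where
  "Gamma_set s = {(g1, g2). g1 \<ge> 0 \<and> g2 \<ge> 0 \<and> g1 + g2 = s}"

definition S_eta :: "('a \<times> 'b \<Rightarrow> ereal) \<Rightarrow> ('a \<Rightarrow> 'b set) \<Rightarrow> real \<Rightarrow> 'a \<Rightarrow> 'b set" where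
  "S_eta f G \<eta> xb = {y \<in> G xb. f (xb, y) \<le> marginal f G xb + ereal \<eta>}"

end

theory Submission
  imports Defs
begin


lemma proper_sep:
  fixes C :: "'a::euclidean_space set"
  assumes cC: "convex C" and ne: "C \<noteq> {}" and n0: "0 \<notin> rel_interior C"
  shows "\<exists>a. (\<forall>x\<in>C. 0 \<le> inner a x) \<and> (\<exists>x\<in>C. 0 < inner a x)"
proof -
  define D where "D = rel_interior C"
  define W where "W = {w. \<forall>x\<in>C. inner w x = 0}"
  have cD: "convex D" using cC convex_rel_interior D_def by blast
  have neD: "D \<noteq> {}" using rel_interior_eq_empty[OF cC] ne D_def by blast
  have cW: "convex W" unfolding W_def convex_def by (auto simp: inner_add_left)
  define D' where "D' = (\<Union>x\<in>D. \<Union>w\<in>W. {x + w})"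
  have cD': "convex D'" unfolding D'_def using convex_sums[OF cD cW] .
  have "0 \<notin> D'"
  proof
    assume "0 \<in> D'"
    then obtain x w where x: "x \<in> D" and w: "w \<in> W" and e: "x + w = 0" unfolding D'_def by (auto simp: eq_commute[of 0])
    have "x \<in> C" using x D_def rel_interior_subset by blast
    then have "inner w x = 0" using w W_def by blast
    moreover have "w = - x" using e by (simp add: eq_neg_iff_add_eq_0 add.commute)
    ultimately have "x = 0" by simp
    then show False using x n0 D_def by simp
  qed
  then obtain a where a0: "a \<noteq> 0" and aD': "\<forall>y\<in>D'. 0 \<le> inner a y"
    using separating_hyperplane_set_0[OF cD'] by blast
  obtain x0 where x0: "x0 \<in> D" using neD by blast
  have aW: "inner a w = 0" if w: "w \<in> W" for w
  proof -
    have "r *\<^sub>R w \<in> W" for r using w unfolding W_def by simp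
    then have "x0 + r *\<^sub>R w \<in> D'" for r unfolding D'_def using x0 by blast
    then have "0 \<le> inner a (x0 + r *\<^sub>R w)" for r using aD' by blast
    then have h: "0 \<le> inner a x0 + r * inner a w" for r by (simp add: inner_add_right)
    show ?thesis
    proof (rule ccontr)
      assume nz: "inner a w \<noteq> 0"
      have "0 \<le> inner a x0 + (- (inner a x0 + 1) / inner a w) * inner a w" using h by blast
      also have "\<dots> = -1" using nz by (simp add: field_simps)
      finally show False by simp
    qed
  qed
  obtain y z where y: "y \<in> span C" and z: "\<And>w. w \<in> span C \<Longrightarrow> orthogonal z w" and ayz: "a = y + z"
    using orthogonal_subspace_decomp_exists[of C a] by metis
  have "z \<in> W" unfolding W_def using z span_base by (auto simp: orthogonal_def)
  then have "inner a z = 0" using aW by blast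
  moreover have "inner y z = 0" using z[OF y] by (simp add: orthogonal_def inner_commute)
  ultimately have "inner z z = 0" using ayz by (simp add: inner_add_left)
  then have "z = 0" by simp
  then have aspan: "a \<in> span C" using ayz y by simp
  have D_sub: "D \<subseteq> {x. 0 \<le> inner a x}"
  proof
    fix x assume "x \<in> D"
    moreover have "(0::'a) \<in> W" unfolding W_def by simp
    ultimately have "x + 0 \<in> D'" unfolding D'_def by blast
    then show "x \<in> {x. 0 \<le> inner a x}" using aD' by simp
  qed
  have "closure D \<subseteq> {x. 0 \<le> inner a x}"
    by (rule closure_minimal[OF D_sub]) (simp add: closed_halfspace_ge)
  then have part1: "\<forall>x\<in>C. 0 \<le> inner a x"
    using convex_closure_rel_interior[OF cC] closure_subset D_def by blast
  have "\<exists>x\<in>C. 0 < inner a x"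
  proof (rule ccontr)
    assume "\<not> ?thesis"
    then have "\<forall>x\<in>C. inner a x = 0" using part1 by force
    then have "orthogonal a a" using orthogonal_to_span[OF aspan, of a]
      by (auto simp: orthogonal_def)
    then show False using a0 by (simp add: orthogonal_def)
  qed
  then show ?thesis using part1 by blast
qed

lemma ri_nearly:
  fixes D E :: "'a::euclidean_space set"
  assumes "convex E" "E \<subseteq> D" "D \<subseteq> closure E"
  shows "rel_interior D \<subseteq> rel_interior E"
proof -
  have h1: "affine hull D = affine hull E"
    by (metis assms(2,3) closure_same_affine_hull hull_mono subset_antisym)
  have "rel_interior D \<subseteq> rel_interior (closure E)"
    by (rule subset_rel_interior[OF assms(3)]) (simp add: h1)
  then show ?thesis using convex_rel_interior_closure[OF assms(1)] by simp
qed

lemma ri_const: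
  fixes S :: "'a::euclidean_space set"
  assumes z0: "z0 \<in> rel_interior S" and z1: "z1 \<in> S" and ge: "\<forall>x\<in>S. c \<le> inner u x"
    and eq: "inner u z0 = c"
  shows "inner u z1 = c"
proof (cases "z1 = z0")
  case True then show ?thesis using eq by simp
next
  case False
  obtain e where e: "e > 0" and be: "ball z0 e \<inter> affine hull S \<subseteq> S"
    using z0 mem_rel_interior_ball by blast
  define d where "d = e / (2 * norm (z1 - z0))"
  have nz: "norm (z1 - z0) > 0" using False by simp
  have d0: "d > 0" unfolding d_def using e nz by simp
  define p where "p = (1 + d) *\<^sub>R z0 + (- d) *\<^sub>R z1"
  have "p \<in> affine hull S"
    unfolding p_def
  proof (rule mem_affine[OF affine_affine_hull])
    show "z0 \<in> affine hull S" using z0 rel_interior_subset[of S] hull_subset[of S affine] by blast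
    show "z1 \<in> affine hull S" using z1 hull_subset[of S affine] by blast
  qed simp
  moreover have "dist z0 p < e"
  proof -
    have "z0 - p = d *\<^sub>R (z1 - z0)" unfolding p_def by (simp add: algebra_simps)
    then have "dist z0 p = d * norm (z1 - z0)" using d0 by (simp add: dist_norm)
    also have "\<dots> = e / 2" unfolding d_def using nz by simp
    finally show ?thesis using e by simp
  qed
  ultimately have "p \<in> S" using be by auto
  then have "c \<le> inner u p" using ge by blast
  moreover have "inner u p = (1 + d) * c - d * inner u z1" unfolding p_def using eq
    by (simp add: inner_add_right inner_diff_right)
  ultimately have "c \<le> (1 + d) * c - d * inner u z1" by simp
  then have "d * inner u z1 \<le> d * c" by (simp add: distrib_right)
  then have "inner u z1 \<le> c" using d0 by simp
  moreover have "c \<le> inner u z1" using ge z1 by blast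
  ultimately show ?thesis by linarith
qed



lemma key:
  fixes \<phi> :: "'k::euclidean_space \<Rightarrow> ereal" and \<Omega> :: "'k set"
  assumes propf: "\<forall>z. \<phi> z \<noteq> -\<infinity>"
   and ncf: "nearly_convex (epigraph \<phi>)"
   and nco: "nearly_convex \<Omega>"
   and ri: "rel_interior (edom \<phi>) \<inter> rel_interior \<Omega> \<noteq> {}"
   and zb: "zb \<in> \<Omega>" and c: "\<phi> zb = ereal c"
   and hyp: "\<And>z s. z \<in> \<Omega> \<Longrightarrow> \<phi> z = ereal s \<Longrightarrow> inner \<zeta> (z - zb) - \<gamma> \<le> s - c"
  shows "\<exists>g1 g2 n. g1 \<ge> 0 \<and> g2 \<ge> 0 \<and> g1 + g2 = \<gamma>
     \<and> (\<forall>z s. \<phi> z = ereal s \<longrightarrow> inner (\<zeta> - n) (z - zb) - g1 \<le> s - c)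
     \<and> (\<forall>z\<in>\<Omega>. inner n (z - zb) \<le> g2)"
proof -
  obtain E1 where cE1: "convex E1" and E1s: "E1 \<subseteq> epigraph \<phi>" and E1c: "epigraph \<phi> \<subseteq> closure E1"
    using ncf unfolding nearly_convex_def by blast
  obtain E2 where cE2: "convex E2" and E2s: "E2 \<subseteq> \<Omega>" and E2c: "\<Omega> \<subseteq> closure E2"
    using nco unfolding nearly_convex_def by blast
  have epi: "(z, s) \<in> epigraph \<phi> \<longleftrightarrow> \<phi> z \<le> ereal s" for z s by (simp add: epigraph_def)
  have "(zb, c) \<in> epigraph \<phi>" using c epi by simp
  then have neE1: "E1 \<noteq> {}" using E1c by auto
  have neE2: "E2 \<noteq> {}" using E2c zb by auto
  define h where "h z s = s - c - inner \<zeta> (z - zb) + \<gamma>" for z s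
  define C where "C = {(z1 - z2, h z1 s - t) | z1 s z2 t. (z1, s) \<in> E1 \<and> z2 \<in> E2 \<and> t < 0}"
  define L where "L = (\<lambda>p::('k \<times> real) \<times> ('k \<times> real).
     (fst (fst p) - fst (snd p), snd (fst p) - inner \<zeta> (fst (fst p)) - snd (snd p)))"
  have linL: "linear L"
    by (rule linearI) (auto simp: L_def inner_add_right inner_scaleR_right algebra_simps)
  define k where "k = ((0::'k), \<gamma> - c + inner \<zeta> zb)"
  have Ceq: "C = (+) k ` (L ` (E1 \<times> (E2 \<times> {t. t < 0})))"
  proof
    show "C \<subseteq> (+) k ` (L ` (E1 \<times> (E2 \<times> {t. t < 0})))"
    proof
      fix x assume "x \<in> C"
      then obtain z1 s z2 t where m: "(z1, s) \<in> E1" "z2 \<in> E2" "t < 0" and x: "x = (z1 - z2, h z1 s - t)"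
        unfolding C_def by blast
      have "x = k + L ((z1, s), (z2, t))" unfolding x k_def L_def h_def by (simp add: inner_diff_right)
      moreover have "((z1, s), (z2, t)) \<in> E1 \<times> (E2 \<times> {t. t < 0})" using m by simp
      ultimately show "x \<in> (+) k ` (L ` (E1 \<times> (E2 \<times> {t. t < 0})))" by blast
    qed
  next
    show "(+) k ` (L ` (E1 \<times> (E2 \<times> {t. t < 0}))) \<subseteq> C"
    proof
      fix x assume "x \<in> (+) k ` (L ` (E1 \<times> (E2 \<times> {t. t < 0})))"
      then obtain z1 s z2 t where m: "(z1, s) \<in> E1" "z2 \<in> E2" "t < 0" and x: "x = k + L ((z1, s), (z2, t))"
        by auto
      have "x = (z1 - z2, h z1 s - t)" unfolding x k_def L_def h_def by (simp add: inner_diff_right)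
      then show "x \<in> C" unfolding C_def using m by blast
    qed
  qed
  have cneg: "convex {t::real. t < 0}" using convex_halfspace_lt[of "1::real" 0] by (simp add: inner_real_def)
  have cC: "convex C" unfolding Ceq
    by (intro convex_translation convex_linear_image[OF linL] convex_Times cE1 cE2 cneg)
  have n0C: "0 \<notin> C"
  proof
    assume "0 \<in> C"
    then obtain z1 s z2 t where m: "(z1, s) \<in> E1" "z2 \<in> E2" "t < 0" and x: "0 = (z1 - z2, h z1 s - t)"
      unfolding C_def by blast
    have zz: "z1 = z2" and ht: "h z1 s = t" using x by (auto simp: zero_prod_def)
    have le: "\<phi> z1 \<le> ereal s" using m(1) E1s epi by blast
    then obtain s' where s': "\<phi> z1 = ereal s'" using propf by (cases "\<phi> z1") auto
    have "s' \<le> s" using le s' by simp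
    moreover have "inner \<zeta> (z1 - zb) - \<gamma> \<le> s' - c" using hyp[OF _ s'] zz m(2) E2s by blast
    ultimately have "0 \<le> h z1 s" unfolding h_def by simp
    then show False using ht m(3) by simp
  qed
  obtain z1' s' where m1: "(z1', s') \<in> E1" using neE1 by auto
  obtain z2' where m2: "z2' \<in> E2" using neE2 by auto
  have "(z1' - z2', h z1' s' - (-1)) \<in> C" unfolding C_def using m1 m2
    by (intro CollectI exI[of _ z1'] exI[of _ s'] exI[of _ z2'] exI[of _ "-1::real"]) simp
  then have neC: "C \<noteq> {}" by blast
  have "0 \<notin> rel_interior C" using n0C rel_interior_subset by blast
  then obtain a where aC: "\<forall>x\<in>C. 0 \<le> inner a x" and aS: "\<exists>x\<in>C. 0 < inner a x"
    using proper_sep[OF cC neC] by blast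
  obtain u \<tau> where a: "a = (u, \<tau>)" by (cases a)
  have sepC: "0 \<le> inner u (z1 - z2) + \<tau> * (h z1 s - t)"
    if "(z1, s) \<in> E1" "z2 \<in> E2" "t < 0" for z1 s z2 t
  proof -
    have "(z1 - z2, h z1 s - t) \<in> C" unfolding C_def using that by blast
    then show ?thesis using aC a by (auto simp: inner_Pair inner_real_def mult.commute)
  qed
  obtain z1s ss z2s ts where ms: "(z1s, ss) \<in> E1" "z2s \<in> E2" "ts < 0"
     and strict: "0 < inner u (z1s - z2s) + \<tau> * (h z1s ss - ts)"
  proof -
    obtain x where "x \<in> C" "0 < inner a x" using aS by blast
    then obtain z1 s z2 t where "(z1, s) \<in> E1" "z2 \<in> E2" "t < 0" "0 < inner a (z1 - z2, h z1 s - t)"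
      unfolding C_def by blast
    then show ?thesis using that a by (auto simp: inner_Pair inner_real_def mult.commute)
  qed
  have tau0: "\<tau> \<ge> 0"
  proof (rule ccontr)
    assume "\<not> \<tau> \<ge> 0"
    then have tn: "\<tau> < 0" by simp
    define K where "K = inner u (z1s - z2s)"
    define t where "t = min (-1) (h z1s ss - (\<bar>K\<bar> + 1) / (- \<tau>))"
    have t0: "t < 0" unfolding t_def by simp
    have "(\<bar>K\<bar> + 1) / (- \<tau>) \<le> h z1s ss - t" unfolding t_def by simp
    then have "\<tau> * (h z1s ss - t) \<le> \<tau> * ((\<bar>K\<bar> + 1) / (- \<tau>))"
      using tn by (intro mult_left_mono_neg) auto
    also have "\<dots> = - (\<bar>K\<bar> + 1)" using tn by (simp add: field_simps)
    finally have "\<tau> * (h z1s ss - t) \<le> - (\<bar>K\<bar> + 1)" .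
    moreover have "0 \<le> K + \<tau> * (h z1s ss - t)" using sepC[OF ms(1,2) t0] K_def by simp
    ultimately show False by linarith
  qed
  have taupos: "\<tau> > 0"
  proof (rule ccontr)
    assume "\<not> \<tau> > 0"
    then have t0: "\<tau> = 0" using tau0 by simp
    have sep0: "0 \<le> inner u (z1 - z2)" if "(z1, s) \<in> E1" "z2 \<in> E2" for z1 s z2
      using sepC[OF that, of "-1"] t0 by simp
    define P where "P = fst ` E1"
    have cP: "convex P" unfolding P_def by (rule convex_linear_image[OF linear_fst cE1])
    have PD: "P \<subseteq> edom \<phi>"
    proof
      fix z assume "z \<in> P"
      then obtain s where "(z, s) \<in> E1" unfolding P_def by auto
      then have "\<phi> z \<le> ereal s" using E1s epi by blast
      then show "z \<in> edom \<phi>" unfolding edom_def by (auto intro: le_less_trans)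
    qed
    have DP: "edom \<phi> \<subseteq> closure P"
    proof
      fix z assume "z \<in> edom \<phi>"
      then obtain r where r: "\<phi> z = ereal r" using propf unfolding edom_def by (cases "\<phi> z") auto
      then have "(z, r) \<in> closure E1" using E1c epi by auto
      moreover have "fst ` closure E1 \<subseteq> closure P" unfolding P_def
        by (rule image_closure_subset) (auto intro: continuous_intros closure_subset[THEN subsetD])
      ultimately show "z \<in> closure P" by force
    qed
    obtain z0 where z0a: "z0 \<in> rel_interior (edom \<phi>)" and z0b: "z0 \<in> rel_interior \<Omega>" using ri by blast
    have z0P: "z0 \<in> rel_interior P" using ri_nearly[OF cP PD DP] z0a by blast
    have z0E: "z0 \<in> rel_interior E2" using ri_nearly[OF cE2 E2s E2c] z0b by blast
    have z0P': "z0 \<in> P" and z0E': "z0 \<in> E2" using z0P z0E rel_interior_subset by blast+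
    obtain s0 where s0: "(z0, s0) \<in> E1" using z0P' unfolding P_def by auto
    have geP: "\<forall>x\<in>P. inner u z0 \<le> inner u x"
    proof
      fix x assume "x \<in> P"
      then obtain s where "(x, s) \<in> E1" unfolding P_def by auto
      from sep0[OF this z0E'] show "inner u z0 \<le> inner u x" by (simp add: inner_diff_right)
    qed
    have geE: "\<forall>x\<in>E2. - inner u z0 \<le> inner (- u) x"
    proof
      fix x assume "x \<in> E2"
      from sep0[OF s0 this] show "- inner u z0 \<le> inner (- u) x" by (simp add: inner_diff_right)
    qed
    have "z1s \<in> P" using ms(1) unfolding P_def by force
    have e1: "inner u z1s = inner u z0" by (rule ri_const[OF z0P \<open>z1s \<in> P\<close> geP refl])
    have e2: "inner (- u) z2s = - inner u z0" by (rule ri_const[OF z0E ms(2) geE]) simp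
    have "inner u (z1s - z2s) = 0" using e1 e2 by (simp add: inner_diff_right)
    then show False using strict t0 by simp
  qed
  define n where "n = (1 / \<tau>) *\<^sub>R u"
  have in1: "0 \<le> inner n (z1 - z2) + h z1 s" if "(z1, s) \<in> E1" "z2 \<in> E2" for z1 s z2
  proof -
    have "0 \<le> inner u (z1 - z2) + \<tau> * h z1 s"
    proof (rule ccontr)
      assume "\<not> ?thesis"
      then have Dn: "inner u (z1 - z2) + \<tau> * h z1 s < 0" by simp
      define t where "t = (inner u (z1 - z2) + \<tau> * h z1 s) / (2 * \<tau>)"
      have t0: "t < 0" unfolding t_def using Dn taupos by (simp add: divide_neg_pos)
      have "\<tau> * t = (inner u (z1 - z2) + \<tau> * h z1 s) / 2" unfolding t_def using taupos by simp
      then have "inner u (z1 - z2) + \<tau> * (h z1 s - t) = (inner u (z1 - z2) + \<tau> * h z1 s) / 2"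
        by (simp add: right_diff_distrib)
      then have "0 \<le> (inner u (z1 - z2) + \<tau> * h z1 s) / 2" using sepC[OF that t0] by simp
      then show False using Dn by simp
    qed
    then have "0 \<le> (inner u (z1 - z2) + \<tau> * h z1 s) / \<tau>" using taupos by simp
    also have "\<dots> = inner n (z1 - z2) + h z1 s" unfolding n_def using taupos by (simp add: field_simps)
    finally show ?thesis .
  qed
  have in2: "0 \<le> inner n (z1 - z2) + h z1 s" if "(z1, s) \<in> epigraph \<phi>" "z2 \<in> \<Omega>" for z1 s z2
  proof -
    have A: "(z1, s) \<in> {p. 0 \<le> inner n (fst p - z2) + (snd p - c - inner \<zeta> (fst p - zb) + \<gamma>)}"
      if z2E: "z2 \<in> E2" for z2
    proof -
      have "closure E1 \<subseteq> {p. 0 \<le> inner n (fst p - z2) + (snd p - c - inner \<zeta> (fst p - zb) + \<gamma>)}"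
      proof (rule closure_minimal)
        show "E1 \<subseteq> {p. 0 \<le> inner n (fst p - z2) + (snd p - c - inner \<zeta> (fst p - zb) + \<gamma>)}"
          using in1 z2E unfolding h_def by auto
        show "closed {p. 0 \<le> inner n (fst p - z2) + (snd p - c - inner \<zeta> (fst p - zb) + \<gamma>)}"
          by (intro closed_Collect_le continuous_intros)
      qed
      then show ?thesis using that E1c \<open>(z1, s) \<in> epigraph \<phi>\<close> by blast
    qed
    have "closure E2 \<subseteq> {z2. 0 \<le> inner n (z1 - z2) + h z1 s}"
    proof (rule closure_minimal)
      show "E2 \<subseteq> {z2. 0 \<le> inner n (z1 - z2) + h z1 s}" using A unfolding h_def by auto
      show "closed {z2. 0 \<le> inner n (z1 - z2) + h z1 s}"
        by (intro closed_Collect_le continuous_intros)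
    qed
    then show ?thesis using E2c that(2) by blast
  qed
  have hzb: "h zb c = \<gamma>" unfolding h_def by simp
  have zbepi: "(zb, c) \<in> epigraph \<phi>" using c epi by simp
  define g2 where "g2 = Sup ((\<lambda>z2. inner n (z2 - zb)) ` \<Omega>)"
  have bnd: "inner n (z2 - zb) \<le> \<gamma>" if "z2 \<in> \<Omega>" for z2
    using in2[OF zbepi that] hzb by (simp add: inner_diff_right)
  have bdd: "bdd_above ((\<lambda>z2. inner n (z2 - zb)) ` \<Omega>)" unfolding bdd_above_def using bnd by blast
  have up: "inner n (z2 - zb) \<le> g2" if "z2 \<in> \<Omega>" for z2
    unfolding g2_def using bdd that by (intro cSup_upper) auto
  have g2ge: "g2 \<ge> 0" using up[OF zb] by simp
  have g2le: "g2 \<le> \<gamma>" unfolding g2_def using zb bnd by (intro cSup_least) auto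
  have sub: "inner (\<zeta> - n) (z - zb) - (\<gamma> - g2) \<le> s - c" if "\<phi> z = ereal s" for z s
  proof -
    have ze: "(z, s) \<in> epigraph \<phi>" using that epi by simp
    have "g2 \<le> s - c - inner (\<zeta> - n) (z - zb) + \<gamma>" unfolding g2_def
    proof (rule cSup_least)
      show "(\<lambda>z2. inner n (z2 - zb)) ` \<Omega> \<noteq> {}" using zb by blast
      fix y assume "y \<in> (\<lambda>z2. inner n (z2 - zb)) ` \<Omega>"
      then obtain z2 where z2: "z2 \<in> \<Omega>" and y: "y = inner n (z2 - zb)" by blast
      have "0 \<le> inner n (z - z2) + h z s" using in2[OF ze z2] .
      then show "y \<le> s - c - inner (\<zeta> - n) (z - zb) + \<gamma>" unfolding y h_def
        by (simp add: inner_diff_right inner_diff_left)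
    qed
    then show ?thesis by simp
  qed
  show ?thesis
    by (rule exI[of _ "\<gamma> - g2"], rule exI[of _ g2], rule exI[of _ n]) (use g2ge g2le sub up in auto)
qed


theorem mainTheorem11:
  fixes f :: "('a::euclidean_space \<times> 'b::euclidean_space) \<Rightarrow> ereal"
    and G :: "'a \<Rightarrow> 'b set"
    and xb :: 'a
    and \<epsilon> :: real
  assumes "proper_fun f" and "nearly_convex_fun f" and "nearly_convex_map G"
    and "\<bar>marginal f G xb\<bar> \<noteq> \<infinity>"
    and "rel_interior (edom f) \<inter> rel_interior (gph G) \<noteq> {}"
    and "\<epsilon> \<ge> 0"
  shows "eps_subdiff (marginal f G) \<epsilon> xb =
           (\<Inter>\<eta>\<in>{0<..}. \<Inter>y\<in>S_eta f G \<eta> xb. \<Union>(g1, g2)\<in>Gamma_set (\<eta> + \<epsilon>).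
              {\<xi>. (\<xi>, 0) \<in> eps_subdiff f g1 (xb, y) + eps_normal g2 (xb, y) (gph G)})
       \<and> eps_subdiff (marginal f G) \<epsilon> xb =
           (\<Inter>\<eta>\<in>{0<..}. \<Union>y. \<Union>(g1, g2)\<in>Gamma_set (\<eta> + \<epsilon>).
              {\<xi>. (\<xi>, 0) \<in> eps_subdiff f g1 (xb, y) + eps_normal g2 (xb, y) (gph G)})"
proof -
  let ?SD = "eps_subdiff (marginal f G) \<epsilon> xb"
  let ?T1 = "(\<Inter>\<eta>\<in>{0<..}. \<Inter>y\<in>S_eta f G \<eta> xb. \<Union>(g1, g2)\<in>Gamma_set (\<eta> + \<epsilon>).
              {\<xi>. (\<xi>, 0) \<in> eps_subdiff f g1 (xb, y) + eps_normal g2 (xb, y) (gph G)})"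
  let ?T2 = "(\<Inter>\<eta>\<in>{0<..}. \<Union>y. \<Union>(g1, g2)\<in>Gamma_set (\<eta> + \<epsilon>).
              {\<xi>. (\<xi>, 0) \<in> eps_subdiff f g1 (xb, y) + eps_normal g2 (xb, y) (gph G)})"
  obtain m where mM: "marginal f G xb = ereal m" using assms(4) by (cases "marginal f G xb") auto
  have propf: "\<forall>z. f z \<noteq> -\<infinity>" using assms(1) unfolding proper_fun_def by blast
  have SDeq: "?SD = {\<xi>. \<forall>x. ereal (inner \<xi> (x - xb) - \<epsilon>) \<le> marginal f G x - ereal m}"
    unfolding eps_subdiff_def using mM by simp
  have fmin: "marginal f G x \<le> f (x, y)" if "y \<in> G x" for x y
    unfolding marginal_def using that by (auto intro: Inf_lower)
  have S1: "?SD \<subseteq> ?T1"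
  proof
    fix \<xi> assume "\<xi> \<in> ?SD"
    then have xi: "ereal (inner \<xi> (x - xb) - \<epsilon>) \<le> marginal f G x - ereal m" for x
      using SDeq by blast
    show "\<xi> \<in> ?T1"
    proof (intro INT_I)
      fix \<eta> :: real and y assume eta: "\<eta> \<in> {0<..}" and y: "y \<in> S_eta f G \<eta> xb"
      have yG: "y \<in> G xb" and fy: "f (xb, y) \<le> ereal m + ereal \<eta>" using y unfolding S_eta_def mM by auto
      have "ereal m \<le> f (xb, y)" using fmin[OF yG] mM by simp
      then obtain c where c: "f (xb, y) = ereal c" and mc: "m \<le> c" and cm: "c \<le> m + \<eta>"
        using fy by (cases "f (xb, y)") auto
      have hyp: "inner (\<xi>, 0::'b) (z - (xb, y)) - (\<eta> + \<epsilon>) \<le> s - c"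
        if z: "z \<in> gph G" and s: "f z = ereal s" for z s
      proof -
        obtain x y' where zz: "z = (x, y')" and y': "y' \<in> G x" using z unfolding gph_def by auto
        have "ereal (inner \<xi> (x - xb) - \<epsilon>) \<le> marginal f G x - ereal m" by (rule xi)
        also have "\<dots> \<le> f (x, y') - ereal m" using fmin[OF y'] by (intro ereal_minus_mono) auto
        finally have "inner \<xi> (x - xb) - \<epsilon> \<le> s - m" using s zz by simp
        then show ?thesis using zz cm by (simp add: inner_Pair)
      qed
      obtain g1 g2 n where g: "g1 \<ge> 0" "g2 \<ge> 0" "g1 + g2 = \<eta> + \<epsilon>"
        and sub: "\<forall>z s. f z = ereal s \<longrightarrow> inner ((\<xi>, 0) - n) (z - (xb, y)) - g1 \<le> s - c"
        and nor: "\<forall>z\<in>gph G. inner n (z - (xb, y)) \<le> g2"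
        using key[OF propf assms(2)[unfolded nearly_convex_fun_def] assms(3)[unfolded nearly_convex_map_def]
            assms(5) _ c hyp] yG unfolding gph_def by blast
      have allz: "\<forall>z. ereal (inner ((\<xi>, 0) - n) (z - (xb, y)) - g1) \<le> f z - ereal c"
      proof
        fix z
        show "ereal (inner ((\<xi>, 0) - n) (z - (xb, y)) - g1) \<le> f z - ereal c"
          using sub[rule_format, of z] propf[rule_format, of z] by (cases "f z") auto
      qed
      have mem1: "(\<xi>, 0) - n \<in> eps_subdiff f g1 (xb, y)"
        unfolding eps_subdiff_def using c allz by simp
      have mem2: "n \<in> eps_normal g2 (xb, y) (gph G)"
        unfolding eps_normal_def using nor yG by (simp add: gph_def)
      have "(\<xi>, 0) \<in> eps_subdiff f g1 (xb, y) + eps_normal g2 (xb, y) (gph G)"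
        using set_plus_intro[OF mem1 mem2] by simp
      moreover have "(g1, g2) \<in> Gamma_set (\<eta> + \<epsilon>)" unfolding Gamma_set_def using g by simp
      ultimately show "\<xi> \<in> (\<Union>(g1, g2)\<in>Gamma_set (\<eta> + \<epsilon>).
              {\<xi>. (\<xi>, 0) \<in> eps_subdiff f g1 (xb, y) + eps_normal g2 (xb, y) (gph G)})"
        by (intro UN_I[of "(g1, g2)"]) auto
    qed
  qed
  have S2: "?T1 \<subseteq> ?T2"
  proof
    fix \<xi> assume xi: "\<xi> \<in> ?T1"
    show "\<xi> \<in> ?T2"
    proof (intro INT_I)
      fix \<eta> :: real assume eta: "\<eta> \<in> {0<..}"
      have "Inf {f (xb, y) | y. y \<in> G xb} < ereal m + ereal \<eta>"
        using mM eta unfolding marginal_def by simp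
      then obtain y where yG: "y \<in> G xb" and fy: "f (xb, y) < ereal m + ereal \<eta>"
        unfolding Inf_less_iff by blast
      have "y \<in> S_eta f G \<eta> xb" unfolding S_eta_def mM using yG fy by simp
      then have "\<xi> \<in> (\<Union>(g1, g2)\<in>Gamma_set (\<eta> + \<epsilon>).
              {\<xi>. (\<xi>, 0) \<in> eps_subdiff f g1 (xb, y) + eps_normal g2 (xb, y) (gph G)})"
        using xi eta by blast
      then show "\<xi> \<in> (\<Union>y. \<Union>(g1, g2)\<in>Gamma_set (\<eta> + \<epsilon>).
              {\<xi>. (\<xi>, 0) \<in> eps_subdiff f g1 (xb, y) + eps_normal g2 (xb, y) (gph G)})"
        by blast
    qed
  qed
  have S3: "?T2 \<subseteq> ?SD"
  proof
    fix \<xi> assume xi: "\<xi> \<in> ?T2"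
    have key2: "inner \<xi> (x - xb) - \<epsilon> + m \<le> s + \<eta>"
      if y': "y' \<in> G x" and s: "f (x, y') = ereal s" and eta: "\<eta> > 0" for x y' s \<eta>
    proof -
      obtain y g1 g2 where gg: "(g1, g2) \<in> Gamma_set (\<eta> + \<epsilon>)"
        and mem: "(\<xi>, 0) \<in> eps_subdiff f g1 (xb, y) + eps_normal g2 (xb, y) (gph G)"
        using xi eta by blast
      obtain p q where pq: "(\<xi>, 0) = p + q" and p: "p \<in> eps_subdiff f g1 (xb, y)"
        and q: "q \<in> eps_normal g2 (xb, y) (gph G)" using mem by (rule set_plus_elim)
      have fin: "\<bar>f (xb, y)\<bar> \<noteq> \<infinity>" using p unfolding eps_subdiff_def by (auto split: if_splits)
      then obtain c where c: "f (xb, y) = ereal c" by (cases "f (xb, y)") auto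
      have inG: "(xb, y) \<in> gph G" using q unfolding eps_normal_def by (auto split: if_splits)
      then have "y \<in> G xb" unfolding gph_def by simp
      then have "ereal m \<le> ereal c" using fmin mM c by metis
      then have mc: "m \<le> c" by simp
      have "ereal (inner p ((x, y') - (xb, y)) - g1) \<le> f (x, y') - f (xb, y)"
        using p fin unfolding eps_subdiff_def by simp
      then have ip: "inner p ((x, y') - (xb, y)) - g1 \<le> s - c" using s c by simp
      have "(x, y') \<in> gph G" using y' unfolding gph_def by simp
      moreover have "\<forall>z\<in>gph G. inner q (z - (xb, y)) \<le> g2" using q inG unfolding eps_normal_def by simp
      ultimately have iq: "inner q ((x, y') - (xb, y)) \<le> g2" by blast
      have "inner (\<xi>, 0::'b) ((x, y') - (xb, y)) = inner p ((x, y') - (xb, y)) + inner q ((x, y') - (xb, y))"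
        using pq by (simp add: inner_add_left)
      then have "inner \<xi> (x - xb) = inner p ((x, y') - (xb, y)) + inner q ((x, y') - (xb, y))"
        by (simp add: inner_Pair)
      moreover have "g1 + g2 = \<eta> + \<epsilon>" using gg unfolding Gamma_set_def by simp
      ultimately show ?thesis using ip iq mc by linarith
    qed
    have "ereal (inner \<xi> (x - xb) - \<epsilon>) \<le> marginal f G x - ereal m" for x
    proof -
      have "ereal (inner \<xi> (x - xb) - \<epsilon> + m) \<le> marginal f G x"
        unfolding marginal_def
      proof (rule Inf_greatest, clarify)
        fix y' assume y': "y' \<in> G x"
        show "ereal (inner \<xi> (x - xb) - \<epsilon> + m) \<le> f (x, y')"
        proof (cases "f (x, y')")
          case (real s)
          have "inner \<xi> (x - xb) - \<epsilon> + m \<le> s"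
            by (rule field_le_epsilon) (rule key2[OF y' real])
          then show ?thesis using real by simp
        next
          case PInf then show ?thesis by simp
        next
          case MInf then show ?thesis using propf by simp
        qed
      qed
      then show ?thesis by (cases "marginal f G x") auto
    qed
    then show "\<xi> \<in> ?SD" using SDeq by blast
  qed
  have e1: "?SD = ?T1" by (rule subset_antisym[OF S1 subset_trans[OF S2 S3]])
  have e2: "?SD = ?T2" by (rule subset_antisym[OF subset_trans[OF S1 S2] S3])
  show ?thesis by (rule conjI[OF e1 e2])
qed

end
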